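(* With respect to the box topology on $\mathcal{X}_*$, there is no continuous map $r\colon\mathcal{X}_*\to\mathbb{R}_+$ that is $1$-homogeneous, i.e. satisfies $r(tX)=t\,r(X)$ for all $t>0$ and $X\in\mathcal{X}_*$.
   Context: mm-spaces are triples $(X,d_X,\mu_X)$ with $(X,d_X)$ complete separable metric and $\mu_X$ a Borel probability measure, with $X=\operatorname{supp}\mu_X$. $\mathcal{X}$ is the set of their isomorphism classes under measure-preserving isometries of supports. Box distance: $\square(X,Y)$ is the infimum of $\varepsilon\ge0$ such that there exist Borel maps $\varphi,\psi$ from $[0,1)$ pushing Lebesgue measure to $\mu_X,\mu_Y$ and a Borel $I_0$ of measure $\ge1-\varepsilon$ with $|d_X(\varphi(s),\varphi(t))-d_Y(\psi(s),\psi(t))|\le\varepsilon$ on $I_0$. It induces the box topology. $tX=(X,t\,d_X,\mu_X)$ for $t\in\mathbb{R}_+=(0,\infty)$. $\mathcal{X}_*=\mathcal{X}\setminus\{*\}$, where $*$ is the one-point space. *)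

theory Defs
  imports "HOL-Analysis.Analysis" "HOL-Probability.Probability"
begin

text \<open>Every complete separable metric space has cardinality
at most that of the continuum, so every mm-space is isomorphic to one whose underlying set
is a subset of the reals (with an arbitrary metric d, not the usual one).\<close>

type_synonym mm = "real set \<times> (real \<Rightarrow> real \<Rightarrow> real) \<times> real measure"

definition mm_set :: "mm \<Rightarrow> real set" where "mm_set M = fst M"
definition mm_dist :: "mm \<Rightarrow> real \<Rightarrow> real \<Rightarrow> real" where "mm_dist M = fst (snd M)"
definition mm_meas :: "mm \<Rightarrow> real measure" where "mm_meas M = snd (snd M)"

definition mm_support :: "real set \<Rightarrow> (real \<Rightarrow> real \<Rightarrow> real) \<Rightarrow> real measure \<Rightarrow> real set" where
  "mm_support X d \<mu> = {x \<in> X. \<forall>r>0. emeasure \<mu> (Metric_space.mball X d x r) > 0}"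

definition mm_space :: "mm \<Rightarrow> bool" where
  "mm_space M \<longleftrightarrow>
     (let X = mm_set M; d = mm_dist M; \<mu> = mm_meas M in
       Metric_space X d \<and> Metric_space.mcomplete X d \<and>
       separable_space (Metric_space.mtopology X d) \<and>
       space \<mu> = X \<and>
       sets \<mu> = sigma_sets X {U. openin (Metric_space.mtopology X d) U} \<and>
       prob_space \<mu> \<and>
       mm_support X d \<mu> = X)"

definition one_point :: "mm \<Rightarrow> bool" where
  "one_point M \<longleftrightarrow> (\<exists>x. mm_set M = {x})"

definition mm_scale :: "real \<Rightarrow> mm \<Rightarrow> mm" where
  "mm_scale t M = (mm_set M, \<lambda>x y. t * mm_dist M x y, mm_meas M)"

definition unit_leb :: "real measure" where
  "unit_leb = restrict_space lborel {0..<1}"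

definition parameter :: "mm \<Rightarrow> (real \<Rightarrow> real) \<Rightarrow> bool" where
  "parameter M \<phi> \<longleftrightarrow> \<phi> \<in> measurable unit_leb (mm_meas M) \<and> distr unit_leb (mm_meas M) \<phi> = mm_meas M"

definition box :: "mm \<Rightarrow> mm \<Rightarrow> real" where
  "box M N = Inf {\<epsilon>. \<epsilon> \<ge> 0 \<and> (\<exists>\<phi> \<psi> I0. parameter M \<phi> \<and> parameter N \<psi> \<and>
        I0 \<in> sets lborel \<and> I0 \<subseteq> {0..<1} \<and> measure lborel I0 \<ge> 1 - \<epsilon> \<and>
        (\<forall>s\<in>I0. \<forall>t\<in>I0. \<bar>mm_dist M (\<phi> s) (\<phi> t) - mm_dist N (\<psi> s) (\<psi> t)\<bar> \<le> \<epsilon>))}"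

text \<open>Continuity w.r.t. the box topology on X_* (box is a metric on isomorphism classes,
so continuity is the epsilon-delta condition; a box-continuous function on representations is
automatically constant on isomorphism classes, since isomorphic spaces have box distance 0).\<close>
definition box_continuous_star :: "(mm \<Rightarrow> real) \<Rightarrow> bool" where
  "box_continuous_star r \<longleftrightarrow>
     (\<forall>M. mm_space M \<and> \<not> one_point M \<longrightarrow>
        (\<forall>\<epsilon>>0. \<exists>\<delta>>0. \<forall>N. mm_space N \<and> \<not> one_point N \<and> box M N < \<delta> \<longrightarrow> \<bar>r N - r M\<bar> < \<epsilon>))"

end

theory Submission
  imports Defs
begin

lemma fin_mm:
  assumes fin: "finite S" and ms: "Metric_space S d"
    and wpos: "\<And>x. x \<in> S \<Longrightarrow> w x > 0" and wsum: "(\<Sum>x\<in>S. w x) = 1"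
  shows "mm_space (S, d, point_measure S (\<lambda>x. ennreal (w x)))"
proof -
  interpret Metric_space S d by (rule ms)
  have top: "topspace mtopology = S" by simp
  have opn: "openin mtopology U \<longleftrightarrow> U \<subseteq> S" for U
  proof
    assume "openin mtopology U" thus "U \<subseteq> S" using openin_subset top by blast
  next
    assume U: "U \<subseteq> S"
    have t1: "t1_space mtopology" using Hausdorff_space_mtopology Hausdorff_imp_t1_space by blast
    have "closedin mtopology (S - U)"
      using t1 fin unfolding t1_space_closedin_finite by auto
    thus "openin mtopology U" using U by (metis Diff_Diff_Int inf.absorb_iff2 openin_closedin_eq top Diff_subset)
  qed
  have sets: "sigma_sets S {U. openin mtopology U} = Pow S"
  proof -
    have "{U. openin mtopology U} = Pow S" using opn by auto
    thus ?thesis using sigma_algebra.sigma_sets_eq[OF sigma_algebra_Pow[of S]] by simp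
  qed
  have comp: "mcomplete"
    by (rule compact_space_imp_mcomplete) (simp add: compact_space_def finite_imp_compactin fin)
  have sep: "separable_space mtopology"
    unfolding separable_space_def
    by (rule exI[of _ S]) (metis countable_finite fin closure_of_topspace top order_refl)
  have tot: "emeasure (point_measure S (\<lambda>x. ennreal (w x))) S = 1"
    using emeasure_point_measure_finite[OF fin, of S] wsum wpos
    by (simp add: sum_ennreal less_imp_le)
  have prob: "prob_space (point_measure S (\<lambda>x. ennreal (w x)))"
    by (rule prob_spaceI) (simp add: space_point_measure tot)
  have supp: "mm_support S d (point_measure S (\<lambda>x. ennreal (w x))) = S"
  proof -
    have "emeasure (point_measure S (\<lambda>x. ennreal (w x))) (mball x r) > 0" if "x \<in> S" "r > 0" for x r
    proof -
      have "emeasure (point_measure S (\<lambda>x. ennreal (w x))) {x} \<le> emeasure (point_measure S (\<lambda>x. ennreal (w x))) (mball x r)"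
        by (rule emeasure_mono) (use that in \<open>auto simp: sets_point_measure\<close>)
      moreover have "emeasure (point_measure S (\<lambda>x. ennreal (w x))) {x} = ennreal (w x)"
        using emeasure_point_measure_finite2[of "{x}" S] that by simp
      ultimately show ?thesis using wpos[OF that(1)] by (metis ennreal_eq_0_iff leD not_gr_zero order_le_less_trans less_imp_le)
    qed
    thus ?thesis unfolding mm_support_def by auto
  qed
  show ?thesis unfolding mm_space_def mm_set_def mm_dist_def mm_meas_def Let_def
    using ms comp sep sets prob supp by (simp add: space_point_measure sets_point_measure)
qed

lemma param_fin:
  assumes fin: "finite S" and into: "\<And>s. s \<in> {0..<1} \<Longrightarrow> \<phi> s \<in> S"
    and pre: "\<And>a. a \<in> S \<Longrightarrow> \<phi> -` {a} \<inter> {0..<1} \<in> sets lborel \<and>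
                 emeasure lborel (\<phi> -` {a} \<inter> {0..<1}) = ennreal (w a)"
  shows "parameter (S, d, point_measure S (\<lambda>x. ennreal (w x))) \<phi>"
proof -
  have sp: "space unit_leb = {0..<1}" by (simp add: unit_leb_def)
  have Om: "{0..<1::real} \<inter> space lborel \<in> sets lborel" by simp
  have setsU: "\<phi> -` {a} \<inter> {0..<1} \<in> sets unit_leb" if "a \<in> S" for a
    unfolding unit_leb_def using pre[OF that] by (auto simp: sets_restrict_space_iff)
  have meas: "\<phi> \<in> measurable unit_leb (point_measure S (\<lambda>x. ennreal (w x)))"
    using fin into setsU by (simp add: sp Pi_iff)
  have "distr unit_leb (point_measure S (\<lambda>x. ennreal (w x))) \<phi> = point_measure S (\<lambda>x. ennreal (w x))"
  proof (rule measure_eqI_finite[OF _ _ fin])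
    show "sets (distr unit_leb (point_measure S (\<lambda>x. ennreal (w x))) \<phi>) = Pow S"
      by (simp add: sets_point_measure)
    show "sets (point_measure S (\<lambda>x. ennreal (w x))) = Pow S" by (simp add: sets_point_measure)
    fix a assume a: "a \<in> S"
    have "emeasure (distr unit_leb (point_measure S (\<lambda>x. ennreal (w x))) \<phi>) {a}
        = emeasure unit_leb (\<phi> -` {a} \<inter> {0..<1})"
      using a meas by (subst emeasure_distr) (auto simp: sets_point_measure sp)
    also have "\<dots> = emeasure lborel (\<phi> -` {a} \<inter> {0..<1})"
      unfolding unit_leb_def by (rule emeasure_restrict_space[OF Om]) auto
    also have "\<dots> = ennreal (w a)" using pre[OF a] by simp
    also have "\<dots> = emeasure (point_measure S (\<lambda>x. ennreal (w x))) {a}"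
      using emeasure_point_measure_finite2[of "{a}" S] a by simp
    finally show "emeasure (distr unit_leb (point_measure S (\<lambda>x. ennreal (w x))) \<phi>) {a} =
        emeasure (point_measure S (\<lambda>x. ennreal (w x))) {a}" .
  qed
  thus ?thesis unfolding parameter_def mm_meas_def using meas by simp
qed

lemma box_le:
  assumes "parameter M \<phi>" "parameter N \<psi>" "I0 \<in> sets lborel" "I0 \<subseteq> {0..<1}"
    "measure lborel I0 \<ge> 1 - e" "e \<ge> 0"
    "\<And>s t. s \<in> I0 \<Longrightarrow> t \<in> I0 \<Longrightarrow> \<bar>mm_dist M (\<phi> s) (\<phi> t) - mm_dist N (\<psi> s) (\<psi> t)\<bar> \<le> e"
  shows "box M N \<le> e"
  unfolding box_def
proof (rule cInf_lower)
  show "e \<in> {\<epsilon>. \<epsilon> \<ge> 0 \<and> (\<exists>\<phi> \<psi> I0. parameter M \<phi> \<and> parameter N \<psi> \<and>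
        I0 \<in> sets lborel \<and> I0 \<subseteq> {0..<1} \<and> measure lborel I0 \<ge> 1 - \<epsilon> \<and>
        (\<forall>s\<in>I0. \<forall>t\<in>I0. \<bar>mm_dist M (\<phi> s) (\<phi> t) - mm_dist N (\<psi> s) (\<psi> t)\<bar> \<le> \<epsilon>))}"
    using assms by blast
qed (auto intro!: bdd_belowI[of _ 0])

definition dZ :: "real \<Rightarrow> real \<Rightarrow> real \<Rightarrow> real" where
  "dZ L x y = (if x = y then 0 else if x = 2 \<or> y = 2 then L else 1)"
definition wZ :: "real \<Rightarrow> real \<Rightarrow> real" where
  "wZ \<delta> x = (if x = 0 then 1/2 else if x = 1 then 1/2 - \<delta> else \<delta>)"
definition wW :: "real \<Rightarrow> real \<Rightarrow> real" where
  "wW \<delta> x = (if x = 0 then 1 - \<delta> else \<delta>)"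
definition spZ :: "real \<Rightarrow> real \<Rightarrow> mm" where
  "spZ \<delta> L = ({0,1,2}, dZ L, point_measure {0,1,2} (\<lambda>x. ennreal (wZ \<delta> x)))"
definition spY :: mm where
  "spY = ({0,1}, \<lambda>x y. \<bar>x - y\<bar>, point_measure {0,1} (\<lambda>x. ennreal (1/2)))"
definition spW :: "real \<Rightarrow> mm" where
  "spW \<delta> = ({0,1}, \<lambda>x y. \<bar>x - y\<bar>, point_measure {0,1} (\<lambda>x. ennreal (wW \<delta> x)))"
definition phY :: "real \<Rightarrow> real" where "phY s = (if s < 1/2 then 0 else 1)"
definition phZ :: "real \<Rightarrow> real \<Rightarrow> real" where
  "phZ \<delta> s = (if s < 1/2 then 0 else if s < 1 - \<delta> then 1 else 2)"
definition phW :: "real \<Rightarrow> real \<Rightarrow> real" where "phW \<delta> s = (if s < 1 - \<delta> then 0 else 1)"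

lemma ms_abs: "Metric_space {0,1::real} (\<lambda>x y. \<bar>x - y\<bar>)"
  by unfold_locales auto

lemma ms_Z: assumes "c > 0" "L \<ge> 1" shows "Metric_space {0,1,2::real} (\<lambda>x y. c * dZ L x y)"
  using assms by unfold_locales (auto simp: dZ_def)

lemma mm_Y: "mm_space spY" unfolding spY_def
  by (rule fin_mm[OF _ ms_abs]) auto

lemma mm_W: "0 < \<delta> \<Longrightarrow> \<delta> < 1 \<Longrightarrow> mm_space (spW \<delta>)" unfolding spW_def
  by (rule fin_mm[OF _ ms_abs]) (auto simp: wW_def)

lemma mm_Zs: assumes "0 < \<delta>" "\<delta> < 1/2" "c > 0" "L \<ge> 1"
  shows "mm_space ({0,1,2}, \<lambda>x y. c * dZ L x y, point_measure {0,1,2} (\<lambda>x. ennreal (wZ \<delta> x)))"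
  by (rule fin_mm[OF _ ms_Z[OF assms(3,4)]]) (use assms in \<open>auto simp: wZ_def\<close>)

lemma mm_Z: assumes "0 < \<delta>" "\<delta> < 1/2" "L \<ge> 1" shows "mm_space (spZ \<delta> L)"
  using mm_Zs[OF assms(1,2) _ assms(3), of 1] unfolding spZ_def by simp

lemma scale_Z: "mm_scale c (spZ \<delta> L) = ({0,1,2}, \<lambda>x y. c * dZ L x y, point_measure {0,1,2} (\<lambda>x. ennreal (wZ \<delta> x)))"
  by (simp add: mm_scale_def spZ_def mm_set_def mm_dist_def mm_meas_def)

lemma np_Y: "\<not> one_point spY" by (auto simp: one_point_def mm_set_def spY_def doubleton_eq_iff)
lemma np_W: "\<not> one_point (spW \<delta>)" by (auto simp: one_point_def mm_set_def spW_def doubleton_eq_iff)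
lemma np_Z: "\<not> one_point (spZ \<delta> L)" 
  by (auto simp: one_point_def mm_set_def spZ_def)
lemma np_Zs: "\<not> one_point (mm_scale c (spZ \<delta> L))" 
  using np_Z by (simp add: one_point_def mm_set_def mm_scale_def)

lemma par_Y: "parameter spY phY"
  unfolding spY_def
proof (rule param_fin)
  fix a :: real assume "a \<in> {0,1}"
  then consider "a = 0" | "a = 1" by auto
  thus "phY -` {a} \<inter> {0..<1} \<in> sets lborel \<and> emeasure lborel (phY -` {a} \<inter> {0..<1}) = ennreal (1/2)"
  proof cases
    case 1
    hence "phY -` {a} \<inter> {0..<1} = {0..<1/2}" by (auto simp: phY_def split: if_splits)
    thus ?thesis by simp
  next
    case 2
    hence "phY -` {a} \<inter> {0..<1} = {1/2..<1}" by (auto simp: phY_def split: if_splits)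
    thus ?thesis by simp
  qed
qed (auto simp: phY_def)

lemma par_W: assumes "0 < \<delta>" "\<delta> < 1" shows "parameter (spW \<delta>) (phW \<delta>)"
  unfolding spW_def
proof (rule param_fin)
  fix a :: real assume "a \<in> {0,1}"
  then consider "a = 0" | "a = 1" by auto
  thus "phW \<delta> -` {a} \<inter> {0..<1} \<in> sets lborel \<and> emeasure lborel (phW \<delta> -` {a} \<inter> {0..<1}) = ennreal (wW \<delta> a)"
  proof cases
    case 1
    hence "phW \<delta> -` {a} \<inter> {0..<1} = {0..<1-\<delta>}" using assms by (auto simp: phW_def split: if_splits)
    thus ?thesis using assms 1 by (simp add: wW_def)
  next
    case 2
    hence "phW \<delta> -` {a} \<inter> {0..<1} = {1-\<delta>..<1}" using assms by (auto simp: phW_def split: if_splits)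
    thus ?thesis using assms 2 by (simp add: wW_def)
  qed
qed (auto simp: phW_def)

lemma par_Zs: assumes "0 < \<delta>" "\<delta> < 1/2"
  shows "parameter ({0,1,2}, d, point_measure {0,1,2} (\<lambda>x. ennreal (wZ \<delta> x))) (phZ \<delta>)"
proof (rule param_fin)
  fix a :: real assume "a \<in> {0,1,2}"
  then consider "a = 0" | "a = 1" | "a = 2" by auto
  thus "phZ \<delta> -` {a} \<inter> {0..<1} \<in> sets lborel \<and> emeasure lborel (phZ \<delta> -` {a} \<inter> {0..<1}) = ennreal (wZ \<delta> a)"
  proof cases
    case 1
    hence "phZ \<delta> -` {a} \<inter> {0..<1} = {0..<1/2}" using assms by (auto simp: phZ_def split: if_splits)
    thus ?thesis using assms 1 by (simp add: wZ_def)
  next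
    case 2
    hence "phZ \<delta> -` {a} \<inter> {0..<1} = {1/2..<1-\<delta>}" using assms by (auto simp: phZ_def split: if_splits)
    thus ?thesis using assms 2 by (simp add: wZ_def)
  next
    case 3
    hence "phZ \<delta> -` {a} \<inter> {0..<1} = {1-\<delta>..<1}" using assms by (auto simp: phZ_def split: if_splits)
    thus ?thesis using assms 3 by (simp add: wZ_def)
  qed
qed (auto simp: phZ_def)

lemma box_YZ: assumes "0 < \<delta>" "\<delta> < 1/2" shows "box spY (spZ \<delta> L) \<le> \<delta>"
proof (rule box_le[OF par_Y _ _ _ _ _, of _ "phZ \<delta>" "{0..<1-\<delta>}"])
  show "parameter (spZ \<delta> L) (phZ \<delta>)" unfolding spZ_def by (rule par_Zs[OF assms])
  fix s t assume "s \<in> {0..<1-\<delta>}" "t \<in> {0..<1-\<delta>}"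
  thus "\<bar>mm_dist spY (phY s) (phY t) - mm_dist (spZ \<delta> L) (phZ \<delta> s) (phZ \<delta> t)\<bar> \<le> \<delta>"
    using assms by (auto simp: mm_dist_def spY_def spZ_def phY_def phZ_def dZ_def)
qed (use assms in auto)

lemma box_WZ: assumes "0 < \<delta>" "\<delta> < 1/2" "L \<ge> 1"
  shows "box (spW \<delta>) (mm_scale (1/L) (spZ \<delta> L)) \<le> 1/L"
proof (rule box_le[OF par_W _ _ _ _ _, of _ _ "phZ \<delta>" "{0..<1}"])
  show "parameter (mm_scale (1/L) (spZ \<delta> L)) (phZ \<delta>)" unfolding scale_Z by (rule par_Zs[OF assms(1,2)])
  fix s t assume "s \<in> {0..<1::real}" "t \<in> {0..<1::real}"
  thus "\<bar>mm_dist (spW \<delta>) (phW \<delta> s) (phW \<delta> t) - mm_dist (mm_scale (1/L) (spZ \<delta> L)) (phZ \<delta> s) (phZ \<delta> t)\<bar> \<le> 1/L"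
    using assms unfolding scale_Z by (auto simp: mm_dist_def spW_def phW_def phZ_def dZ_def)
qed (use assms in auto)

theorem corollary3p9:
  shows "\<not> (\<exists>r :: mm \<Rightarrow> real.
            (\<forall>M. mm_space M \<and> \<not> one_point M \<longrightarrow> r M > 0) \<and>
            (\<forall>M t. mm_space M \<and> \<not> one_point M \<and> t > 0 \<longrightarrow> r (mm_scale t M) = t * r M) \<and>
            box_continuous_star r)"
proof
  assume "\<exists>r :: mm \<Rightarrow> real.
            (\<forall>M. mm_space M \<and> \<not> one_point M \<longrightarrow> r M > 0) \<and>
            (\<forall>M t. mm_space M \<and> \<not> one_point M \<and> t > 0 \<longrightarrow> r (mm_scale t M) = t * r M) \<and>
            box_continuous_star r"
  then obtain r :: "mm \<Rightarrow> real" where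
    pos: "\<And>M. mm_space M \<Longrightarrow> \<not> one_point M \<Longrightarrow> r M > 0" and
    hom: "\<And>M t. mm_space M \<Longrightarrow> \<not> one_point M \<Longrightarrow> t > 0 \<Longrightarrow> r (mm_scale t M) = t * r M" and
    cont: "box_continuous_star r" by blast
  obtain d0 where d0: "d0 > 0" and
    c0: "\<And>N. mm_space N \<Longrightarrow> \<not> one_point N \<Longrightarrow> box spY N < d0 \<Longrightarrow> \<bar>r N - r spY\<bar> < 1"
    using cont mm_Y np_Y unfolding box_continuous_star_def
    by (metis zero_less_one)
  define \<delta> where "\<delta> = min (d0/2) (1/4)"
  have dp: "0 < \<delta>" "\<delta> < 1/2" "\<delta> < d0" using d0 by (auto simp: \<delta>_def)
  have bndZ: "r (spZ \<delta> L) < r spY + 1" if "L \<ge> 1" for L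
  proof -
    have "box spY (spZ \<delta> L) < d0" using box_YZ[OF dp(1,2), of L] dp(3) by linarith
    thus ?thesis using c0[OF mm_Z[OF dp(1,2) that] np_Z] by linarith
  qed
  define f where "f = r (spW \<delta>)"
  have fpos: "f > 0" unfolding f_def using pos[OF mm_W np_W] dp by simp
  obtain d1 where d1: "d1 > 0" and
    c1: "\<And>N. mm_space N \<Longrightarrow> \<not> one_point N \<Longrightarrow> box (spW \<delta>) N < d1 \<Longrightarrow> \<bar>r N - f\<bar> < f/2"
  proof -
    have "mm_space (spW \<delta>)" using mm_W[of \<delta>] dp by simp
    moreover have "f/2 > 0" using fpos by simp
    ultimately show ?thesis using that cont np_W[of \<delta>] unfolding box_continuous_star_def f_def by blast
  qed
  have rYp: "r spY > 0" using pos[OF mm_Y np_Y] .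
  define L where "L = max 1 (max (2/d1) (2 * (r spY + 1) / f + 1))"
  have L1: "L \<ge> 1" by (simp add: L_def)
  have Lp: "L > 0" using L1 by simp
  have "1/L < d1"
  proof -
    have "2/d1 \<le> L" by (simp add: L_def)
    hence "2 \<le> L * d1" using d1 by (simp add: field_simps)
    hence "1 < L * d1" by linarith
    thus ?thesis using Lp by (simp add: field_simps)
  qed
  hence "box (spW \<delta>) (mm_scale (1/L) (spZ \<delta> L)) < d1" using box_WZ[OF dp(1,2) L1] by linarith
  moreover have "mm_space (mm_scale (1/L) (spZ \<delta> L))" unfolding scale_Z
    by (rule mm_Zs) (use dp L1 in auto)
  ultimately have "\<bar>r (mm_scale (1/L) (spZ \<delta> L)) - f\<bar> < f/2" using c1 np_Zs by blast
  hence A: "r (mm_scale (1/L) (spZ \<delta> L)) > f/2" by linarith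
  have B: "r (mm_scale (1/L) (spZ \<delta> L)) = r (spZ \<delta> L) / L"
    using hom[OF mm_Z[OF dp(1,2) L1] np_Z, of "1/L"] Lp by simp
  have "r (spZ \<delta> L) / L < (r spY + 1) / L" using bndZ[OF L1] Lp by (simp add: divide_strict_right_mono)
  also have "(r spY + 1) / L \<le> f/2"
  proof -
    have "2 * (r spY + 1) / f \<le> L" by (simp add: L_def)
    hence "2 * (r spY + 1) \<le> L * f" using fpos by (simp add: field_simps)
    thus ?thesis using Lp by (simp add: field_simps)
  qed
  finally show False using A B by linarith
qed

end
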